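(* Let $M$ be a partially ordered set with smallest element $\theta$, equipped with an $M$-distance $h_M$, and let $\omega\colon M\to M$ be a modulus of continuity. Let $(T,h_T)$ and $(X,h_X)$ be $M$-pseudo metric spaces, $(Y,h_Y)$ an $M$-distance space, and $t\in T$ fixed. Let $h^\omega_T(t_1,t_2)=\omega(h_T(t_1,t_2))$, and let $\Lambda\colon H^\omega(T,X)\to Y$ and a monotone operator $\lambda\colon H^\omega(T,M)\to M$ satisfy $h_Y(\Lambda f(\cdot),\Lambda f(t))\le\lambda(h_X(f(\cdot),f(t)))$ for all $f\in H^\omega(T,X)$. Then for every $f\in H^\omega(T,X)$, $$h_Y(\Lambda f(\cdot),\Lambda f(t))\le \lambda\big(\omega(h_T(\cdot,t))\big).$$ If moreover $\lambda(\theta)=\theta$ and there exist $\phi_X\colon H^\omega(T,M)\to H^\omega(T,X)$ and $\phi_Y\in H(M,Y)$ with $h_Y(\phi_Y(m),\phi_Y(\theta))=m$ for $m=\lambda(\omega(h_T(\cdot,t)))$ and $\Lambda\circ\phi_X=\phi_Y\circ\lambda$, then the inequality becomes an equality for the function $f_{\omega,t}(\cdot)=\phi_X(\omega(h_T(\cdot,t)))$.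
   Context: A partially ordered set $M$ has a reflexive, antisymmetric, transitive relation $\le$ and smallest element $\theta$. For a set $X$, $h_X\colon X\times X\to M$ is an $M$-distance if $h_X(x,x)=\theta$ and $h_X(x,y)=h_X(y,x)$; a fixed $M$-distance $h_M$ on $M$ is given. An $M$-distance $h_X$ is an $M$-pseudo metric if $h_M(h_X(x,x_1),h_X(x,x_2))\le h_X(x_1,x_2)$ for all $x,x_1,x_2$. For $M$-distance spaces, $H(X,Y)=\{f:\ h_Y(f(x_1),f(x_2))\le h_X(x_1,x_2)\ \forall x_1,x_2\}$. A modulus of continuity is $\omega\colon M\to M$ with $\omega(\theta)=\theta$, $\omega$ non-decreasing, and $h_M(\omega(m_1),\omega(m_2))\le\omega(h_M(m_1,m_2))$ for all $m_1,m_2\in M$. For $M$-distance spaces $(T,h_T)$, $(Z,h_Z)$, $H^\omega(T,Z)=\{f\colon T\to Z:\ h_Z(f(t_1),f(t_2))\le\omega(h_T(t_1,t_2))\ \forall t_1,t_2\in T\}$, i.e. the class $H(T,Z)$ with $T$ carrying the $M$-distance $h^\omega_T$. An operator $\lambda\colon H^\omega(T,M)\to M$ is monotone if $u\le v$ pointwise implies $\lambda(u)\le\lambda(v)$. Notation: $\Lambda f(t)$ denotes $\Lambda$ applied to the constant function $\tau\mapsto f(t)$; $\lambda(\theta)$ is $\lambda$ of the constant function $\theta$; $h_T(\cdot,t)$ is $\tau\mapsto h_T(\tau,t)$. *)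

theory Defs
  imports Main
begin

definition M_distance :: "'m \<Rightarrow> ('a \<Rightarrow> 'a \<Rightarrow> 'm) \<Rightarrow> bool" where
  "M_distance \<theta> h \<longleftrightarrow> (\<forall>x. h x x = \<theta>) \<and> (\<forall>x y. h x y = h y x)"

definition M_pseudo_metric :: "'m::order \<Rightarrow> ('m \<Rightarrow> 'm \<Rightarrow> 'm) \<Rightarrow> ('a \<Rightarrow> 'a \<Rightarrow> 'm) \<Rightarrow> bool" where
  "M_pseudo_metric \<theta> hM h \<longleftrightarrow> M_distance \<theta> h \<and>
     (\<forall>x x1 x2. hM (h x x1) (h x x2) \<le> h x1 x2)"

definition Hcl :: "('a \<Rightarrow> 'a \<Rightarrow> 'm::order) \<Rightarrow> ('b \<Rightarrow> 'b \<Rightarrow> 'm) \<Rightarrow> ('a \<Rightarrow> 'b) set" where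
  "Hcl hX hY = {f. \<forall>x1 x2. hY (f x1) (f x2) \<le> hX x1 x2}"

definition modulus_of_continuity :: "'m::order \<Rightarrow> ('m \<Rightarrow> 'm \<Rightarrow> 'm) \<Rightarrow> ('m \<Rightarrow> 'm) \<Rightarrow> bool" where
  "modulus_of_continuity \<theta> hM \<omega> \<longleftrightarrow> \<omega> \<theta> = \<theta> \<and> mono \<omega> \<and>
     (\<forall>m1 m2. hM (\<omega> m1) (\<omega> m2) \<le> \<omega> (hM m1 m2))"

definition Homega :: "('m::order \<Rightarrow> 'm) \<Rightarrow> ('t \<Rightarrow> 't \<Rightarrow> 'm) \<Rightarrow> ('z \<Rightarrow> 'z \<Rightarrow> 'm) \<Rightarrow> ('t \<Rightarrow> 'z) set" where
  "Homega \<omega> hT hZ = Hcl (\<lambda>t1 t2. \<omega> (hT t1 t2)) hZ"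

definition monotone_op :: "('t \<Rightarrow> 'm::order) set \<Rightarrow> (('t \<Rightarrow> 'm) \<Rightarrow> 'm) \<Rightarrow> bool" where
  "monotone_op S l \<longleftrightarrow> (\<forall>u\<in>S. \<forall>v\<in>S. (\<forall>\<tau>. u \<tau> \<le> v \<tau>) \<longrightarrow> l u \<le> l v)"

end

theory Submission
  imports Defs
begin

theorem corollary2:
  fixes \<theta> :: "'m::order"
    and hM :: "'m \<Rightarrow> 'm \<Rightarrow> 'm"
    and \<omega> :: "'m \<Rightarrow> 'm"
    and hT :: "'t \<Rightarrow> 't \<Rightarrow> 'm"
    and hX :: "'x \<Rightarrow> 'x \<Rightarrow> 'm"
    and hY :: "'y \<Rightarrow> 'y \<Rightarrow> 'm"
    and t :: 't
    and \<Lambda> :: "('t \<Rightarrow> 'x) \<Rightarrow> 'y"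
    and l :: "('t \<Rightarrow> 'm) \<Rightarrow> 'm"
  assumes least: "\<forall>m. \<theta> \<le> m"
    and hM: "M_distance \<theta> hM"
    and mod: "modulus_of_continuity \<theta> hM \<omega>"
    and hT: "M_pseudo_metric \<theta> hM hT"
    and hX: "M_pseudo_metric \<theta> hM hX"
    and hY: "M_distance \<theta> hY"
    and mono_l: "monotone_op (Homega \<omega> hT hM) l"
    and Lam: "\<forall>f\<in>Homega \<omega> hT hX. hY (\<Lambda> f) (\<Lambda> (\<lambda>_. f t)) \<le> l (\<lambda>\<tau>. hX (f \<tau>) (f t))"
  shows "(\<forall>f\<in>Homega \<omega> hT hX. hY (\<Lambda> f) (\<Lambda> (\<lambda>_. f t)) \<le> l (\<lambda>\<tau>. \<omega> (hT \<tau> t)))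
    \<and> (\<forall>(\<phi>X :: 'm \<Rightarrow> 'x) (\<phi>Y :: 'm \<Rightarrow> 'y).
          l (\<lambda>_. \<theta>) = \<theta>
          \<and> (\<forall>g\<in>Homega \<omega> hT hM. \<phi>X \<circ> g \<in> Homega \<omega> hT hX)
          \<and> \<phi>Y \<in> Hcl hM hY
          \<and> hY (\<phi>Y (l (\<lambda>\<tau>. \<omega> (hT \<tau> t)))) (\<phi>Y \<theta>) = l (\<lambda>\<tau>. \<omega> (hT \<tau> t))
          \<and> (\<forall>g\<in>Homega \<omega> hT hM. \<Lambda> (\<phi>X \<circ> g) = \<phi>Y (l g))
        \<longrightarrow> (let f = \<phi>X \<circ> (\<lambda>\<tau>. \<omega> (hT \<tau> t))
             in hY (\<Lambda> f) (\<Lambda> (\<lambda>_. f t)) = l (\<lambda>\<tau>. \<omega> (hT \<tau> t))))"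
proof -
  have dM: "\<And>x. hM x x = \<theta>" "\<And>x y. hM x y = hM y x" using hM unfolding M_distance_def by auto
  have dT: "\<And>x. hT x x = \<theta>" "\<And>x y. hT x y = hT y x"
    and pT: "\<And>x x1 x2. hM (hT x x1) (hT x x2) \<le> hT x1 x2"
    using hT unfolding M_pseudo_metric_def M_distance_def by auto
  have dX: "\<And>x y. hX x y = hX y x"
    and pX: "\<And>x x1 x2. hM (hX x x1) (hX x x2) \<le> hX x1 x2"
    using hX unfolding M_pseudo_metric_def M_distance_def by auto
  have w0: "\<omega> \<theta> = \<theta>" and wm: "mono \<omega>" and wc: "\<And>m1 m2. hM (\<omega> m1) (\<omega> m2) \<le> \<omega> (hM m1 m2)"
    using mod unfolding modulus_of_continuity_def by auto
  define k where "k = (\<lambda>\<tau>. \<omega> (hT \<tau> t))"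
  have kH: "k \<in> Homega \<omega> hT hM"
    unfolding Homega_def Hcl_def k_def
  proof (clarify)
    fix t1 t2
    have "hM (\<omega> (hT t1 t)) (\<omega> (hT t2 t)) \<le> \<omega> (hM (hT t1 t) (hT t2 t))" by (rule wc)
    also have "\<dots> \<le> \<omega> (hT t1 t2)"
      using wm pT[of t t1 t2] dT(2) by (metis monoD)
    finally show "hM (\<omega> (hT t1 t)) (\<omega> (hT t2 t)) \<le> \<omega> (hT t1 t2)" .
  qed
  have P1: "\<forall>f\<in>Homega \<omega> hT hX. hY (\<Lambda> f) (\<Lambda> (\<lambda>_. f t)) \<le> l k"
  proof
    fix f assume f: "f \<in> Homega \<omega> hT hX"
    hence fb: "\<And>a b. hX (f a) (f b) \<le> \<omega> (hT a b)" unfolding Homega_def Hcl_def by auto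
    have gH: "(\<lambda>\<tau>. hX (f \<tau>) (f t)) \<in> Homega \<omega> hT hM"
      unfolding Homega_def Hcl_def
    proof (clarify)
      fix t1 t2
      have "hM (hX (f t1) (f t)) (hX (f t2) (f t)) \<le> hX (f t1) (f t2)"
        using pX[of "f t" "f t1" "f t2"] dX by metis
      also have "\<dots> \<le> \<omega> (hT t1 t2)" by (rule fb)
      finally show "hM (hX (f t1) (f t)) (hX (f t2) (f t)) \<le> \<omega> (hT t1 t2)" .
    qed
    have "l (\<lambda>\<tau>. hX (f \<tau>) (f t)) \<le> l k"
      using mono_l gH kH fb unfolding monotone_op_def k_def by (metis (no_types, lifting))
    thus "hY (\<Lambda> f) (\<Lambda> (\<lambda>_. f t)) \<le> l k" using Lam f order_trans by blast
  qed
  have cH: "(\<lambda>_. \<theta>) \<in> Homega \<omega> hT hM"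
    unfolding Homega_def Hcl_def using dM least by auto
  have P2: "\<forall>(\<phi>X :: 'm \<Rightarrow> 'x) (\<phi>Y :: 'm \<Rightarrow> 'y).
          l (\<lambda>_. \<theta>) = \<theta>
          \<and> (\<forall>g\<in>Homega \<omega> hT hM. \<phi>X \<circ> g \<in> Homega \<omega> hT hX)
          \<and> \<phi>Y \<in> Hcl hM hY
          \<and> hY (\<phi>Y (l k)) (\<phi>Y \<theta>) = l k
          \<and> (\<forall>g\<in>Homega \<omega> hT hM. \<Lambda> (\<phi>X \<circ> g) = \<phi>Y (l g))
        \<longrightarrow> (let f = \<phi>X \<circ> k in hY (\<Lambda> f) (\<Lambda> (\<lambda>_. f t)) = l k)"
  proof (intro allI impI)
    fix \<phi>X :: "'m \<Rightarrow> 'x" and \<phi>Y :: "'m \<Rightarrow> 'y"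
    assume A: "l (\<lambda>_. \<theta>) = \<theta>
          \<and> (\<forall>g\<in>Homega \<omega> hT hM. \<phi>X \<circ> g \<in> Homega \<omega> hT hX)
          \<and> \<phi>Y \<in> Hcl hM hY
          \<and> hY (\<phi>Y (l k)) (\<phi>Y \<theta>) = l k
          \<and> (\<forall>g\<in>Homega \<omega> hT hM. \<Lambda> (\<phi>X \<circ> g) = \<phi>Y (l g))"
    have e1: "\<Lambda> (\<phi>X \<circ> k) = \<phi>Y (l k)" using A kH by blast
    have kt: "k t = \<theta>" unfolding k_def using dT w0 by simp
    have "(\<lambda>_. (\<phi>X \<circ> k) t) = \<phi>X \<circ> (\<lambda>_. \<theta>)" using kt by (auto simp: fun_eq_iff)
    hence e2: "\<Lambda> (\<lambda>_. (\<phi>X \<circ> k) t) = \<phi>Y \<theta>" using A cH by metis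
    show "let f = \<phi>X \<circ> k in hY (\<Lambda> f) (\<Lambda> (\<lambda>_. f t)) = l k"
      using e1 e2 A by (simp add: Let_def)
  qed
  show ?thesis using P1 P2 unfolding k_def by blast
qed

end
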